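(* Let $n\ge 3$ and let $S_n$ be the star graph with vertices $a_1,\dots,a_n$ and center $a_1$. Then $$\liminf_{p\to\infty}\|M_{S_n}\|_p^p\geq \frac{1+\sqrt{n}}{2}.$$
   Context: For a finite connected graph $G=(V,E)$ with graph distance $d_G$ and $f:V\to\mathbb{R}$, $M_Gf(v)=\sup_{r\geq 0}\frac{1}{|B(v,r)|}\sum_{u\in B(v,r)}|f(u)|$, where $B(v,r)=\{u\in V: d_G(u,v)\le r\}$. For $g:V\to\mathbb{R}$, $\|g\|_p=(\sum_{v\in V}|g(v)|^p)^{1/p}$ and $\|M_G\|_p=\sup_{f\neq 0}\|M_Gf\|_p/\|f\|_p$. The star graph $S_n$ has edges exactly between $a_1$ and each $a_i$, $i\ge 2$. *)

theory Defs
  imports "HOL-Analysis.Analysis"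
begin

definition graph_rel :: "'a set \<Rightarrow> ('a \<Rightarrow> 'a \<Rightarrow> bool) \<Rightarrow> ('a \<times> 'a) set" where
  "graph_rel V E = {(u, v). u \<in> V \<and> v \<in> V \<and> E u v}"

definition gdist :: "'a set \<Rightarrow> ('a \<Rightarrow> 'a \<Rightarrow> bool) \<Rightarrow> 'a \<Rightarrow> 'a \<Rightarrow> nat" where
  "gdist V E u v = (LEAST k. (u, v) \<in> (graph_rel V E) ^^ k)"

definition gball :: "'a set \<Rightarrow> ('a \<Rightarrow> 'a \<Rightarrow> bool) \<Rightarrow> 'a \<Rightarrow> real \<Rightarrow> 'a set" where
  "gball V E v r = {u \<in> V. real (gdist V E u v) \<le> r}"

definition maxop :: "'a set \<Rightarrow> ('a \<Rightarrow> 'a \<Rightarrow> bool) \<Rightarrow> ('a \<Rightarrow> real) \<Rightarrow> 'a \<Rightarrow> real" where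
  "maxop V E f v = (SUP r \<in> {0..}. (\<Sum>u \<in> gball V E v r. \<bar>f u\<bar>) / real (card (gball V E v r)))"

definition pnorm :: "'a set \<Rightarrow> real \<Rightarrow> ('a \<Rightarrow> real) \<Rightarrow> real" where
  "pnorm V p g = (\<Sum>v \<in> V. \<bar>g v\<bar> powr p) powr (1 / p)"

definition maxop_norm :: "'a set \<Rightarrow> ('a \<Rightarrow> 'a \<Rightarrow> bool) \<Rightarrow> real \<Rightarrow> real" where
  "maxop_norm V E p = (SUP f \<in> {f. \<exists>v \<in> V. f v \<noteq> 0}. pnorm V p (maxop V E f) / pnorm V p f)"

text \<open>Star graph S_n on vertices 1..n (vertex i stands for a_i), centre 1.\<close>
definition star_edge :: "nat \<Rightarrow> nat \<Rightarrow> nat \<Rightarrow> bool" where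
  "star_edge n i j = ((i = 1 \<and> 2 \<le> j \<and> j \<le> n) \<or> (j = 1 \<and> 2 \<le> i \<and> i \<le> n))"

end

theory Submission
  imports Defs
begin

lemma gdist_le: "(u, v) \<in> graph_rel V E ^^ k \<Longrightarrow> gdist V E u v \<le> k"
  unfolding gdist_def by (rule Least_le)

lemma gdist_in: "(u, v) \<in> graph_rel V E ^^ k \<Longrightarrow> (u, v) \<in> graph_rel V E ^^ gdist V E u v"
  unfolding gdist_def by (rule LeastI)

lemma gdist_self: "gdist V E u u = 0"
  by (rule le_zero_eq[THEN iffD1], rule gdist_le) simp

lemma rel_iff: "(u, v) \<in> graph_rel V E \<longleftrightarrow> u \<in> V \<and> v \<in> V \<and> E u v"
  unfolding graph_rel_def by simp

lemma ball_center:
  assumes "n \<ge> 3"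
  shows "gball {1..n} (star_edge n) 1 0 = {1}"
proof -
  have "u = 1" if "u \<in> {1..n}" "gdist {1..n} (star_edge n) u 1 = 0" for u
  proof (rule ccontr)
    assume "u \<noteq> 1"
    then have "(u, 1) \<in> graph_rel {1..n} (star_edge n) ^^ 1"
      using that assms by (auto simp: rel_iff star_edge_def)
    from gdist_in[OF this] that(2) \<open>u \<noteq> 1\<close> show False by simp
  qed
  then show ?thesis using assms by (auto simp: gball_def gdist_self)
qed

lemma ball_leaf:
  assumes "n \<ge> 3" "2 \<le> i" "i \<le> n"
  shows "gball {1..n} (star_edge n) i 1 = {i, 1}"
proof -
  let ?R = "graph_rel {1..n} (star_edge n)"
  have "u = i \<or> u = 1" if "u \<in> {1..n}" "gdist {1..n} (star_edge n) u i \<le> 1" for u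
  proof (rule ccontr)
    assume "\<not> (u = i \<or> u = 1)"
    then have "(u, i) \<in> ?R ^^ 2"
      using that assms by (auto simp: rel_iff star_edge_def numeral_2_eq_2 relcomp_unfold)
    from gdist_in[OF this] that(2) \<open>\<not> (u = i \<or> u = 1)\<close> that(1) assms show False
      by (cases "gdist {1..n} (star_edge n) u i") (auto simp: rel_iff star_edge_def)
  qed
  moreover have "gdist {1..n} (star_edge n) 1 i \<le> 1"
    by (rule gdist_le) (use assms in \<open>auto simp: rel_iff star_edge_def\<close>)
  ultimately show ?thesis using assms by (auto simp: gball_def gdist_self)
qed

lemma maxop_ge:
  assumes "finite V" "r \<ge> 0"
  shows "(\<Sum>u \<in> gball V E v r. \<bar>f u\<bar>) / real (card (gball V E v r)) \<le> maxop V E f v"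
proof -
  have "(\<lambda>r. (\<Sum>u \<in> gball V E v r. \<bar>f u\<bar>) / real (card (gball V E v r))) ` {0..}
      \<subseteq> (\<lambda>S. (\<Sum>u \<in> S. \<bar>f u\<bar>) / real (card S)) ` Pow V"
    by (auto simp: gball_def)
  then have "bdd_above ((\<lambda>r. (\<Sum>u \<in> gball V E v r. \<bar>f u\<bar>) / real (card (gball V E v r))) ` {0..})"
    using assms(1) by (meson bdd_above_mono finite_Pow_iff finite_imageI bdd_above_finite)
  then show ?thesis unfolding maxop_def by (rule cSUP_upper[rotated]) (use assms in auto)
qed

lemma maxop_nonneg: "finite V \<Longrightarrow> 0 \<le> maxop V E f v"
  using maxop_ge[where V=V and r=0 and E=E and v=v and f=f] by (meson order_trans divide_nonneg_nonneg of_nat_0_le_iff sum_nonneg abs_ge_zero order_refl)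

lemma maxop_le:
  assumes "finite V"
  shows "maxop V E f v \<le> (\<Sum>u \<in> V. \<bar>f u\<bar>)"
  unfolding maxop_def
proof (rule cSUP_least)
  fix r :: real
  let ?B = "gball V E v r"
  have sub: "?B \<subseteq> V" by (auto simp: gball_def)
  have a: "(\<Sum>u \<in> ?B. \<bar>f u\<bar>) \<le> (\<Sum>u \<in> V. \<bar>f u\<bar>)"
    by (rule sum_mono2[OF assms sub]) auto
  have b: "(\<Sum>u \<in> ?B. \<bar>f u\<bar>) / real (card ?B) \<le> (\<Sum>u \<in> ?B. \<bar>f u\<bar>)"
  proof (cases "card ?B = 0")
    case True then show ?thesis by (simp add: sum_nonneg)
  next
    case False then show ?thesis
    proof -
      have "0 \<le> (\<Sum>u \<in> ?B. \<bar>f u\<bar>)" by (simp add: sum_nonneg)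
      moreover have "1 \<le> real (card ?B)" using False by simp
      ultimately have "(\<Sum>u \<in> ?B. \<bar>f u\<bar>) / real (card ?B) \<le> (\<Sum>u \<in> ?B. \<bar>f u\<bar>) / 1"
        by (intro divide_left_mono) auto
      then show ?thesis by simp
    qed
  qed
  from a b show "(\<Sum>u \<in> ?B. \<bar>f u\<bar>) / real (card ?B) \<le> (\<Sum>u \<in> V. \<bar>f u\<bar>)" by linarith
qed auto

lemma ratio_bound:
  assumes fin: "finite V" and p: "p \<ge> 1" and v0: "v0 \<in> V" "f v0 \<noteq> 0"
  shows "pnorm V p (maxop V E f) / pnorm V p f \<le> real (card V)^2"
proof -
  define S where "S = (\<Sum>v \<in> V. \<bar>f v\<bar> powr p)"
  define P where "P = S powr (1/p)"
  define N where "N = real (card V)"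
  have S0: "0 < S" unfolding S_def
    by (rule sum_pos2[OF fin v0(1)]) (use v0 in auto)
  have P0: "0 < P" using S0 by (simp add: P_def)
  have "card V > 0" using fin v0 card_gt_0_iff by blast
  then have N1: "1 \<le> N" by (simp add: N_def)
  have fu: "\<bar>f u\<bar> \<le> P" if "u \<in> V" for u
  proof -
    have "\<bar>f u\<bar> powr p \<le> S" unfolding S_def
      by (rule member_le_sum[OF that _ fin]) auto
    then have "(\<bar>f u\<bar> powr p) powr (1/p) \<le> S powr (1/p)"
      by (intro powr_mono2) (use p in auto)
    moreover have "(\<bar>f u\<bar> powr p) powr (1/p) = \<bar>f u\<bar>"
      using p by (simp add: powr_powr)
    ultimately show ?thesis by (simp add: P_def)
  qed
  have sumf: "(\<Sum>u \<in> V. \<bar>f u\<bar>) \<le> N * P"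
    unfolding N_def by (rule sum_bounded_above) (use fu in auto)
  have Mb: "\<bar>maxop V E f v\<bar> \<le> N * P" for v
    using maxop_le[OF fin, of E f v] maxop_nonneg[OF fin, of E f v] sumf by linarith
  have "(\<Sum>v \<in> V. \<bar>maxop V E f v\<bar> powr p) \<le> N * (N * P) powr p"
    unfolding N_def by (rule sum_bounded_above) (use Mb p in \<open>auto simp: N_def intro!: powr_mono2\<close>)
  then have "pnorm V p (maxop V E f) \<le> (N * (N * P) powr p) powr (1/p)"
    unfolding pnorm_def by (intro powr_mono2) (use p in \<open>auto intro!: sum_nonneg\<close>)
  also have "\<dots> = N powr (1/p) * (N * P)"
    using p N1 P0 by (simp add: powr_mult powr_powr)
  also have "\<dots> \<le> N * (N * P)"
  proof -
    have "N powr (1/p) \<le> N powr 1" by (rule powr_mono) (use p N1 in auto)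
    then show ?thesis using N1 P0 by (intro mult_right_mono) auto
  qed
  finally have "pnorm V p (maxop V E f) \<le> N^2 * P" by (simp add: power2_eq_square)
  moreover have "pnorm V p f = P" by (simp add: pnorm_def P_def S_def)
  ultimately show ?thesis using P0 by (simp add: divide_le_eq N_def)
qed

theorem lemma3p4:
  fixes n :: nat
  assumes "n \<ge> 3"
  shows "Liminf at_top (\<lambda>p::real. ereal ((maxop_norm {1..n} (star_edge n) p) powr p))
           \<ge> ereal ((1 + sqrt (real n)) / 2)"
proof (rule Liminf_bounded)
  define V where "V = {1..n}"
  define E where "E = star_edge n"
  define s where "s = sqrt (real n)"
  define x where "x = 1 + s"
  have s0: "s > 0" using assms by (simp add: s_def)
  have ss: "s^2 = real n" by (simp add: s_def)
  have x1: "x > 1" using s0 by (simp add: x_def)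
  have key: "(1 + s) / 2 \<le> maxop_norm V E p powr p" if p: "p \<ge> 1" for p :: real
  proof -
    define c where "c = x powr (2/p)"
    define f where "f = (\<lambda>v::nat. if v = 1 then c else 1)"
    have c0: "c > 0" using x1 by (simp add: c_def)
    have cp: "c powr p = x^2" using p x1 by (simp add: c_def powr_powr powr_realpow)
    have half: "((1 + c) / 2) powr p \<ge> x"
    proof -
      have "sqrt c \<le> (1 + c) / 2"
      proof -
        have "0 \<le> (sqrt c - 1)^2" by simp
        also have "\<dots> = c - 2 * sqrt c + 1" using c0 by (simp add: power2_diff)
        finally show ?thesis by simp
      qed
      then have "sqrt c powr p \<le> ((1 + c) / 2) powr p"
        by (intro powr_mono2) (use p c0 in auto)
      moreover have "sqrt c powr p = x"
        using c0 p x1 by (simp add: powr_half_sqrt[symmetric] c_def powr_powr)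
      ultimately show ?thesis by simp
    qed
    have fin: "finite V" by (simp add: V_def)
    have M1: "c \<le> maxop V E f 1"
      using maxop_ge[OF fin, where r=0 and E=E and v=1 and f=f] ball_center[OF assms]
      by (simp add: V_def E_def f_def abs_of_pos c0)
    have Mi: "(1 + c) / 2 \<le> maxop V E f i" if "2 \<le> i" "i \<le> n" for i
      using maxop_ge[OF fin, where r=1 and E=E and v=i and f=f] ball_leaf[OF assms that] that
      by (simp add: V_def E_def f_def abs_of_pos c0 add.commute)
    define A where "A = (\<Sum>v \<in> V. \<bar>maxop V E f v\<bar> powr p)"
    define B where "B = (\<Sum>v \<in> V. \<bar>f v\<bar> powr p)"
    have splitV: "\<And>g::nat \<Rightarrow> real. sum g V = g 1 + sum g {2..n}"
      using assms by (simp add: V_def sum.atLeast_Suc_atMost numeral_2_eq_2)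
    have B: "B = x^2 + (real n - 1)"
      unfolding B_def splitV using assms by (simp add: f_def cp abs_of_pos c0 of_nat_diff)
    have "A \<ge> x^2 + (real n - 1) * x"
    proof -
      have "c powr p \<le> \<bar>maxop V E f 1\<bar> powr p"
        by (intro powr_mono2) (use p c0 M1 in auto)
      moreover have "(\<Sum>i \<in> {2..n}. x) \<le> (\<Sum>i \<in> {2..n}. \<bar>maxop V E f i\<bar> powr p)"
      proof (rule sum_mono)
        fix i assume "i \<in> {2..n}"
        then have "(1 + c) / 2 \<le> \<bar>maxop V E f i\<bar>" using Mi[of i] by auto
        then have "((1 + c) / 2) powr p \<le> \<bar>maxop V E f i\<bar> powr p"
          by (intro powr_mono2) (use p c0 in auto)
        then show "x \<le> \<bar>maxop V E f i\<bar> powr p" using half by linarith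
      qed
      moreover have "(\<Sum>i \<in> {2..n}. x) = (real n - 1) * x" using assms by (simp add: of_nat_diff)
      ultimately show ?thesis unfolding A_def splitV cp by linarith
    qed
    have "real n \<ge> 3" using assms by simp
    moreover have "x^2 > 0" using x1 by simp
    ultimately have Bpos: "B > 0" using B by linarith
    have "A / B \<ge> (x^2 + (real n - 1) * x) / (x^2 + (real n - 1))"
      using B Bpos \<open>A \<ge> _\<close> by (simp add: divide_right_mono)
    moreover have "(x^2 + (real n - 1) * x) / (x^2 + (real n - 1)) = (1 + s) / 2"
    proof -
      have d: "(1 + s)^2 + (s^2 - 1) > 0" using s0 by (simp add: power2_eq_square algebra_simps add_pos_pos)
      have "((1 + s)^2 + (s^2 - 1) * (1 + s)) = (1 + s) / 2 * ((1 + s)^2 + (s^2 - 1))"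
        by (simp add: power2_eq_square field_simps)
      then show ?thesis unfolding ss[symmetric] x_def using d by (simp add: divide_eq_eq)
    qed
    ultimately have AB: "(1 + s) / 2 \<le> A / B" by simp
    have fne: "f \<in> {f. \<exists>v \<in> V. f v \<noteq> 0}" using assms by (auto simp: V_def f_def intro!: bexI[of _ 2])
    have bdd: "bdd_above ((\<lambda>f. pnorm V p (maxop V E f) / pnorm V p f) ` {f. \<exists>v \<in> V. f v \<noteq> 0})"
      by (rule bdd_aboveI2) (use ratio_bound[OF fin p] in blast)
    have r_le: "pnorm V p (maxop V E f) / pnorm V p f \<le> maxop_norm V E p"
      unfolding maxop_norm_def by (rule cSUP_upper[OF fne bdd])
    have A0: "A \<ge> 0" unfolding A_def by (auto intro!: sum_nonneg)
    have "(pnorm V p (maxop V E f) / pnorm V p f) powr p = A / B"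
      using p A0 Bpos by (simp add: pnorm_def A_def[symmetric] B_def[symmetric] powr_divide powr_powr)
    moreover have "(pnorm V p (maxop V E f) / pnorm V p f) powr p \<le> maxop_norm V E p powr p"
      by (intro powr_mono2 r_le) (use p in \<open>auto simp: pnorm_def\<close>)
    ultimately show ?thesis using AB by linarith
  qed
  show "\<forall>\<^sub>F p in at_top. ereal ((1 + sqrt (real n)) / 2) \<le> ereal (maxop_norm {1..n} (star_edge n) p powr p)"
    unfolding eventually_at_top_linorder
    by (rule exI[of _ 1]) (use key in \<open>simp add: V_def E_def s_def\<close>)
qed

end
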